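(* Let $(X_n)_{n\ge1}$ and $(Y_n)_{n\ge1}$ be two sequences of random variables on a common probability space such that $0\le X_n\le\kappa Y_n$ for some positive constant $\kappa$ (with $0<\mathbb{E}(Y_n)<\infty$). If $Y_n/\mathbb{E}(Y_n)\to1$ in probability, then $$\frac{\mathbb{E}(X_n)}{\mathbb{E}(Y_n)}\to0\iff\frac{X_n}{Y_n}\to0\text{ in probability}.$$ If, in addition, $\mathbb{E}(X_n)\ge\tau\mathbb{E}(Y_n)$ for some $\tau>0$ and $Y_n/\mathbb{E}(Y_n)\to1$ in quadratic mean, then $$\frac{X_n}{\mathbb{E}(X_n)}\to1\text{ in probability}\implies\frac{\mathrm{Var}(X_n)}{[\mathbb{E}(X_n)]^2}\to0.$$ *)

theory Defs
  imports "HOL-Probability.Probability"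
begin

definition conv_in_prob :: "'a measure \<Rightarrow> (nat \<Rightarrow> 'a \<Rightarrow> real) \<Rightarrow> real \<Rightarrow> bool" where
  "conv_in_prob M Z c \<longleftrightarrow>
     (\<forall>e>0. (\<lambda>n. measure M {\<omega> \<in> space M. \<bar>Z n \<omega> - c\<bar> > e}) \<longlonglongrightarrow> 0)"

definition conv_in_qm :: "'a measure \<Rightarrow> (nat \<Rightarrow> 'a \<Rightarrow> real) \<Rightarrow> real \<Rightarrow> bool" where
  "conv_in_qm M Z c \<longleftrightarrow>
     (\<forall>n. integrable M (\<lambda>\<omega>. (Z n \<omega> - c)^2)) \<and>
     (\<lambda>n. integral\<^sup>L M (\<lambda>\<omega>. (Z n \<omega> - c)^2)) \<longlonglongrightarrow> 0"

end

theory Submission imports Defs begin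
lemma aux1:
  fixes m x y e :: real
  assumes "m > 0" "0 \<le> x" "0 \<le> y" "\<bar>x / y - 0\<bar> > e" "e > 0" "\<not> \<bar>y / m - 1\<bar> > 1/2"
  shows "x / m > e / 2"
proof -
  have "y \<ge> m/2" using assms(1,6) by (auto simp: field_simps abs_if split: if_splits)
  hence yp: "y > 0" using assms(1) by simp
  have "x > e * y" using assms(4) yp assms(2) by (simp add: field_simps)
  moreover have "e * y \<ge> e * (m/2)" using \<open>y \<ge> m/2\<close> assms(5) by (intro mult_left_mono) auto
  ultimately have "x > e * m / 2" by simp
  thus ?thesis using assms(1) by (simp add: field_simps)
qed

lemma aux2:
  fixes m x y k :: real
  assumes "m > 0" "0 \<le> x" "x \<le> k * y" "k > 0"
  shows "x / m \<le> x / y + k * \<bar>y / m - 1\<bar>"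
proof (cases "y = 0")
  case True thus ?thesis using assms by simp
next
  case False
  have yp: "y > 0"
  proof (rule ccontr)
    assume "\<not> y > 0" hence "y < 0" using False by simp
    hence "k * y < 0" using assms(4) by (simp add: mult_pos_neg)
    thus False using assms by simp
  qed
  have R: "x / y \<le> k" using assms yp by (simp add: field_simps)
  have "x / m = x / y + (x / y) * (y / m - 1)" using yp assms(1) by (simp add: field_simps)
  also have "(x / y) * (y / m - 1) \<le> (x/y) * \<bar>y / m - 1\<bar>"
    using assms yp by (intro mult_left_mono) auto
  also have "\<dots> \<le> k * \<bar>y / m - 1\<bar>" using R by (intro mult_right_mono) auto
  finally show ?thesis by simp
qed

lemma aux3:
  fixes u z c :: real
  assumes "0 \<le> u" "u \<le> c * z" "c \<ge> 1" "z \<ge> 0"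
  shows "(u - 1)^2 \<le> (min \<bar>u - 1\<bar> (2*c))^2 + 4 * c^2 * (z - 1)^2"
proof -
  have D: "\<bar>u - 1\<bar> \<le> c + c * \<bar>z - 1\<bar>"
  proof (cases "u \<ge> 1")
    case True
    have "c * (z - 1) \<le> c * \<bar>z - 1\<bar>" using assms(3) by (intro mult_left_mono) auto
    hence "c * z \<le> c + c * \<bar>z - 1\<bar>" by (simp add: algebra_simps)
    thus ?thesis using True assms by simp
  next
    case False
    have "0 \<le> c * \<bar>z - 1\<bar>" using assms(3) by simp
    thus ?thesis using assms False by linarith
  qed
  show ?thesis
  proof (cases "\<bar>u - 1\<bar> \<le> 2*c")
    case True thus ?thesis by (simp add: min_def)
  next
    case False
    hence "c * \<bar>z - 1\<bar> > c" using D by simp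
    hence "\<bar>z - 1\<bar> > 1" using assms(3) by simp
    hence "c \<le> c * \<bar>z - 1\<bar>" using assms(3) by simp
    hence "\<bar>u - 1\<bar> \<le> 2 * c * \<bar>z - 1\<bar>" using D by simp
    hence "\<bar>u - 1\<bar>^2 \<le> (2 * c * \<bar>z - 1\<bar>)^2" by (intro power_mono) auto
    hence "(u - 1)^2 \<le> 4 * c^2 * (z - 1)^2" by (simp add: power_mult_distrib)
    moreover have "0 \<le> (min \<bar>u - 1\<bar> (2*c))^2" by simp
    ultimately show ?thesis by linarith
  qed
qed
context prob_space begin

lemma bdd_conv_exp:
  fixes W :: "nat \<Rightarrow> 'a \<Rightarrow> real"
  assumes meas: "\<And>n. W n \<in> borel_measurable M"
    and bnd: "\<And>n x. x \<in> space M \<Longrightarrow> 0 \<le> W n x \<and> W n x \<le> B"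
    and cv: "\<And>e. e > 0 \<Longrightarrow> (\<lambda>n. prob {x\<in>space M. W n x > e}) \<longlonglongrightarrow> 0"
  shows "(\<lambda>n. expectation (W n)) \<longlonglongrightarrow> 0"
proof (rule LIMSEQ_I)
  fix r :: real assume r: "0 < r"
  have B0: "0 \<le> B" using bnd[of _ 0] by (meson dual_order.trans ex_in_conv not_empty)
  define e where "e = r / 3"
  have e: "e > 0" using r e_def by simp
  have key: "expectation (W n) \<le> e + B * prob {x\<in>space M. W n x > e}" for n
  proof -
    have [measurable]: "W n \<in> borel_measurable M" by (rule meas)
    have "expectation (W n) \<le> expectation (\<lambda>x. e + B * indicator {x\<in>space M. W n x > e} x)"
    proof (rule integral_mono')
      show "integrable M (\<lambda>x. e + B * indicator {x\<in>space M. W n x > e} x)"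
        by (intro Bochner_Integration.integrable_add integrable_mult_right integrable_real_indicator) (auto simp: less_top[symmetric])
      fix x assume x: "x \<in> space M"
      show "W n x \<le> e + B * indicator {x\<in>space M. W n x > e} x"
        using bnd[OF x, of n] x e by (auto simp: indicator_def)
      show "0 \<le> e + B * indicator {x\<in>space M. W n x > e} x"
        using B0 e by (auto simp: indicator_def)
    qed
    also have "\<dots> = e + B * prob {x\<in>space M. W n x > e}"
      by (subst Bochner_Integration.integral_add) (auto simp: prob_space less_top[symmetric])
    finally show ?thesis .
  qed
  have "\<forall>\<^sub>F n in sequentially. prob {x\<in>space M. W n x > e} < e / (B + 1)"
    using cv[OF e] e B0 by (auto simp: order_tendsto_iff)
  then obtain N where N: "\<And>n. n \<ge> N \<Longrightarrow> prob {x\<in>space M. W n x > e} < e / (B + 1)"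
    by (auto simp: eventually_sequentially)
  show "\<exists>no. \<forall>n\<ge>no. norm (expectation (W n) - 0) < r"
  proof (intro exI allI impI)
    fix n assume "n \<ge> N"
    hence p: "prob {x\<in>space M. W n x > e} < e / (B + 1)" by (rule N)
    have "B * prob {x\<in>space M. W n x > e} \<le> B * (e / (B+1))"
      using p B0 by (intro mult_left_mono) auto
    also have "\<dots> \<le> e" using B0 e by (simp add: field_simps)
    finally have "expectation (W n) < r" using key[of n] e_def r by linarith
    moreover have "expectation (W n) \<ge> 0" using bnd by (intro Bochner_Integration.integral_nonneg) auto
    ultimately show "norm (expectation (W n) - 0) < r" by simp
  qed
qed

lemma markov_conv:
  fixes W :: "nat \<Rightarrow> 'a \<Rightarrow> real"
  assumes "\<And>n. integrable M (W n)"
    and "\<And>n x. x \<in> space M \<Longrightarrow> 0 \<le> W n x"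
    and "(\<lambda>n. expectation (W n)) \<longlonglongrightarrow> 0"
    and e: "e > 0"
  shows "(\<lambda>n. prob {x\<in>space M. W n x > e}) \<longlonglongrightarrow> 0"
proof (rule tendsto_sandwich[where f="\<lambda>_. 0" and h="\<lambda>n. expectation (W n) / e"])
  show "\<forall>\<^sub>F n in sequentially. 0 \<le> prob {x\<in>space M. W n x > e}" by simp
  show "\<forall>\<^sub>F n in sequentially. prob {x\<in>space M. W n x > e} \<le> expectation (W n) / e"
  proof (intro always_eventually allI)
    fix n
    have [measurable]: "W n \<in> borel_measurable M" using assms(1) by auto
    have "prob {x\<in>space M. W n x > e} \<le> prob {x\<in>space M. W n x \<ge> e}"
      by (intro finite_measure_mono) auto
    also have "\<dots> \<le> expectation (W n) / e"
      by (rule integral_Markov_inequality_measure[where A="space M"]) (use assms in auto)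
    finally show "prob {x\<in>space M. W n x > e} \<le> expectation (W n) / e" .
  qed
  show "(\<lambda>n. expectation (W n) / e) \<longlonglongrightarrow> 0"
    using tendsto_divide_zero[OF assms(3)] by simp
qed simp

lemma union_conv:
  assumes "\<And>n. A n \<in> events" "\<And>n. B n \<in> events" "\<And>n. C n \<in> events"
    and "\<And>n. A n \<subseteq> B n \<union> C n"
    and "(\<lambda>n. prob (B n)) \<longlonglongrightarrow> 0" "(\<lambda>n. prob (C n)) \<longlonglongrightarrow> 0"
  shows "(\<lambda>n. prob (A n)) \<longlonglongrightarrow> 0"
proof (rule tendsto_sandwich[where f="\<lambda>_. 0" and h="\<lambda>n. prob (B n) + prob (C n)"])
  show "\<forall>\<^sub>F n in sequentially. prob (A n) \<le> prob (B n) + prob (C n)"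
  proof (intro always_eventually allI)
    fix n
    have "prob (A n) \<le> prob (B n \<union> C n)" using assms by (intro finite_measure_mono) auto
    also have "\<dots> \<le> prob (B n) + prob (C n)" using assms by (intro measure_subadditive) auto
    finally show "prob (A n) \<le> prob (B n) + prob (C n)" .
  qed
  show "(\<lambda>n. prob (B n) + prob (C n)) \<longlonglongrightarrow> 0" using tendsto_add[OF assms(5,6)] by simp
qed simp_all

end
context prob_space begin

lemma main:
  fixes X Y :: "nat \<Rightarrow> 'a \<Rightarrow> real" and \<kappa> :: real
  assumes mX[measurable]: "\<And>n. X n \<in> borel_measurable M"
    and mY[measurable]: "\<And>n. Y n \<in> borel_measurable M"
    and kp: "\<kappa> > 0"
    and XY: "\<And>n \<omega>. \<omega> \<in> space M \<Longrightarrow> 0 \<le> X n \<omega> \<and> X n \<omega> \<le> \<kappa> * Y n \<omega>"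
    and iY: "\<And>n. integrable M (Y n)"
    and EY: "\<And>n. expectation (Y n) > 0"
    and cZ: "conv_in_prob M (\<lambda>n \<omega>. Y n \<omega> / expectation (Y n)) 1"
  shows "((\<lambda>n. expectation (X n) / expectation (Y n)) \<longlonglongrightarrow> 0
            \<longleftrightarrow> conv_in_prob M (\<lambda>n \<omega>. X n \<omega> / Y n \<omega>) 0)
       \<and> (\<forall>\<tau>::real. \<tau> > 0
            \<longrightarrow> (\<forall>n. expectation (X n) \<ge> \<tau> * expectation (Y n))
            \<longrightarrow> conv_in_qm M (\<lambda>n \<omega>. Y n \<omega> / expectation (Y n)) 1
            \<longrightarrow> conv_in_prob M (\<lambda>n \<omega>. X n \<omega> / expectation (X n)) 1
            \<longrightarrow> (\<lambda>n. variance (X n) / (expectation (X n))^2) \<longlonglongrightarrow> 0)"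
proof -
  define m where "m n = expectation (Y n)" for n
  have m0: "m n > 0" for n using EY m_def by simp
  have Yge: "Y n \<omega> \<ge> 0" if "\<omega> \<in> space M" for n \<omega>
  proof -
    have "0 \<le> \<kappa> * Y n \<omega>" using XY[OF that, of n] by linarith
    thus ?thesis using kp by (simp add: zero_le_mult_iff)
  qed
  have iX: "integrable M (X n)" for n
  proof (rule Bochner_Integration.integrable_bound[where f="\<lambda>\<omega>. \<kappa> * Y n \<omega>"])
    show "integrable M (\<lambda>\<omega>. \<kappa> * Y n \<omega>)" using iY by auto
    show "AE x in M. norm (X n x) \<le> norm (\<kappa> * Y n x)"
    proof (rule AE_I2)
      fix x assume "x \<in> space M"
      thus "norm (X n x) \<le> norm (\<kappa> * Y n x)" using XY[of x n] by auto
    qed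
  qed auto
  have EX0: "expectation (X n) \<ge> 0" for n using XY by (intro Bochner_Integration.integral_nonneg) auto
  have cZ': "(\<lambda>n. prob {\<omega>\<in>space M. \<bar>Y n \<omega> / m n - 1\<bar> > e}) \<longlonglongrightarrow> 0" if "e > 0" for e
    using cZ that unfolding conv_in_prob_def m_def by auto
  have part1: "((\<lambda>n. expectation (X n) / m n) \<longlonglongrightarrow> 0)
            \<longleftrightarrow> conv_in_prob M (\<lambda>n \<omega>. X n \<omega> / Y n \<omega>) 0"
  proof
    assume h: "(\<lambda>n. expectation (X n) / m n) \<longlonglongrightarrow> 0"
    show "conv_in_prob M (\<lambda>n \<omega>. X n \<omega> / Y n \<omega>) 0"
      unfolding conv_in_prob_def
    proof (intro allI impI)
      fix e :: real assume e: "e > 0"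
      have C: "(\<lambda>n. prob {\<omega>\<in>space M. X n \<omega> / m n > e / 2}) \<longlonglongrightarrow> 0"
        by (rule markov_conv) (use h e XY m0 iX in \<open>auto intro!: divide_nonneg_pos\<close>)
      show "(\<lambda>n. prob {\<omega>\<in>space M. \<bar>X n \<omega> / Y n \<omega> - 0\<bar> > e}) \<longlonglongrightarrow> 0"
      proof (rule union_conv[OF _ _ _ _ cZ'[of "1/2"] C])
        fix n
        show "{\<omega>\<in>space M. \<bar>X n \<omega> / Y n \<omega> - 0\<bar> > e}
          \<subseteq> {\<omega>\<in>space M. \<bar>Y n \<omega> / m n - 1\<bar> > 1/2} \<union> {\<omega>\<in>space M. X n \<omega> / m n > e / 2}"
          using aux1[OF m0] XY Yge e by blast
      qed (auto)
    qed
  next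
    assume h: "conv_in_prob M (\<lambda>n \<omega>. X n \<omega> / Y n \<omega>) 0"
    define R where "R n \<omega> = X n \<omega> / Y n \<omega>" for n \<omega>
    have [measurable]: "R n \<in> borel_measurable M" for n unfolding R_def by measurable
    have Rb: "0 \<le> R n \<omega> \<and> R n \<omega> \<le> \<kappa>" if "\<omega> \<in> space M" for n \<omega>
    proof (cases "Y n \<omega> = 0")
      case True thus ?thesis using kp by (simp add: R_def)
    next
      case False
      hence "Y n \<omega> > 0" using Yge[OF that, of n] by simp
      thus ?thesis using XY[OF that, of n] by (simp add: R_def field_simps)
    qed
    have iR: "integrable M (R n)" for n
      by (rule integrable_const_bound[where B=\<kappa>]) (use Rb in auto)
    have ER: "(\<lambda>n. expectation (R n)) \<longlonglongrightarrow> 0"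
    proof (rule bdd_conv_exp[OF _ Rb])
      fix e :: real assume e: "e > 0"
      have ab: "\<bar>X n \<omega> / Y n \<omega> - 0\<bar> = R n \<omega>" if "\<omega> \<in> space M" for n \<omega>
        unfolding diff_zero R_def[symmetric] using Rb[OF that, of n] by (rule abs_of_nonneg[OF conjunct1])
      have "{\<omega>\<in>space M. R n \<omega> > e} = {\<omega>\<in>space M. \<bar>X n \<omega> / Y n \<omega> - 0\<bar> > e}" for n
        using ab by auto
      thus "(\<lambda>n. prob {\<omega>\<in>space M. R n \<omega> > e}) \<longlonglongrightarrow> 0"
        using h e unfolding conv_in_prob_def by simp
    qed auto
    define F where "F n \<omega> = max 0 (1 - Y n \<omega> / m n)" for n \<omega>
    have [measurable]: "F n \<in> borel_measurable M" for n unfolding F_def by measurable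
    have Fb: "0 \<le> F n \<omega> \<and> F n \<omega> \<le> 1" if "\<omega> \<in> space M" for n \<omega>
      using Yge[OF that, of n] m0[of n] by (auto simp: F_def)
    have iF: "integrable M (F n)" for n
      by (rule integrable_const_bound[where B=1]) (use Fb in auto)
    have EF: "(\<lambda>n. expectation (F n)) \<longlonglongrightarrow> 0"
    proof (rule bdd_conv_exp[OF _ Fb])
      fix e :: real assume e: "e > 0"
      show "(\<lambda>n. prob {\<omega>\<in>space M. F n \<omega> > e}) \<longlonglongrightarrow> 0"
        by (rule union_conv[OF _ _ _ _ cZ'[OF e] cZ'[OF e]]) (auto simp: F_def)
    qed auto
    have EZ: "expectation (\<lambda>\<omega>. Y n \<omega> / m n - 1) = 0" for n
      using m0[of n] iY[of n] by (simp add: m_def prob_space)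
    have absZ: "expectation (\<lambda>\<omega>. \<bar>Y n \<omega> / m n - 1\<bar>) = 2 * expectation (F n)" for n
    proof -
      have "expectation (\<lambda>\<omega>. \<bar>Y n \<omega> / m n - 1\<bar>)
          = expectation (\<lambda>\<omega>. (Y n \<omega> / m n - 1) + 2 * F n \<omega>)"
        by (rule Bochner_Integration.integral_cong) (auto simp: F_def abs_if max_def)
      also have "\<dots> = 2 * expectation (F n)"
        using EZ[of n] iF[of n] iY[of n] by (simp add: prob_space)
      finally show ?thesis .
    qed
    show "(\<lambda>n. expectation (X n) / m n) \<longlonglongrightarrow> 0"
    proof (rule tendsto_sandwich[where f="\<lambda>_. 0" and h="\<lambda>n. expectation (R n) + \<kappa> * (2 * expectation (F n))"])
      show "\<forall>\<^sub>F n in sequentially. 0 \<le> expectation (X n) / m n"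
        using EX0 m0 by (intro always_eventually allI divide_nonneg_pos) auto
      show "\<forall>\<^sub>F n in sequentially. expectation (X n) / m n \<le> expectation (R n) + \<kappa> * (2 * expectation (F n))"
      proof (intro always_eventually allI)
        fix n
        have "expectation (X n) / m n = expectation (\<lambda>\<omega>. X n \<omega> / m n)" by simp
        also have "\<dots> \<le> expectation (\<lambda>\<omega>. R n \<omega> + \<kappa> * \<bar>Y n \<omega> / m n - 1\<bar>)"
        proof (rule integral_mono)
          show "integrable M (\<lambda>\<omega>. R n \<omega> + \<kappa> * \<bar>Y n \<omega> / m n - 1\<bar>)"
            using iR[of n] iY[of n] by auto
          show "integrable M (\<lambda>\<omega>. X n \<omega> / m n)" using iX[of n] by auto
          fix \<omega> assume w: "\<omega> \<in> space M"
          show "X n \<omega> / m n \<le> R n \<omega> + \<kappa> * \<bar>Y n \<omega> / m n - 1\<bar>"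
            unfolding R_def using aux2[OF m0[of n], of "X n \<omega>" \<kappa> "Y n \<omega>"] XY[OF w, of n] kp by simp
        qed
        also have "\<dots> = expectation (R n) + \<kappa> * (2 * expectation (F n))"
          using iR[of n] iY[of n] absZ[of n] by (simp add: prob_space)
        finally show "expectation (X n) / m n \<le> expectation (R n) + \<kappa> * (2 * expectation (F n))" .
      qed
      show "(\<lambda>n. expectation (R n) + \<kappa> * (2 * expectation (F n))) \<longlonglongrightarrow> 0"
        using tendsto_add[OF ER tendsto_mult_right_zero[OF tendsto_mult_right_zero[OF EF]]] by simp
    qed simp
  qed
  have part2: "(\<lambda>n. variance (X n) / (expectation (X n))^2) \<longlonglongrightarrow> 0"
    if tau: "\<tau> > 0" and Etau: "\<forall>n. expectation (X n) \<ge> \<tau> * m n"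
      and qm: "conv_in_qm M (\<lambda>n \<omega>. Y n \<omega> / m n) 1"
      and cU: "conv_in_prob M (\<lambda>n \<omega>. X n \<omega> / expectation (X n)) 1" for \<tau>
  proof -
    define a where "a n = expectation (X n)" for n
    have a0: "a n > 0" for n using Etau m0[of n] tau a_def by (smt (verit) mult_pos_pos)
    define c where "c = max 1 (\<kappa> / \<tau>)"
    have c1: "c \<ge> 1" by (simp add: c_def)
    have UZ: "X n \<omega> / a n \<le> c * (Y n \<omega> / m n)" if w: "\<omega> \<in> space M" for n \<omega>
    proof -
      have "X n \<omega> / a n \<le> X n \<omega> / (\<tau> * m n)"
        using XY[OF w, of n] Etau a_def tau m0[of n] a0[of n] mult_pos_pos[OF tau m0[of n]] by (intro divide_left_mono) auto
      also have "\<dots> \<le> \<kappa> * Y n \<omega> / (\<tau> * m n)"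
        using XY[OF w, of n] tau m0[of n] by (intro divide_right_mono) auto
      also have "\<dots> = (\<kappa> / \<tau>) * (Y n \<omega> / m n)" by simp
      also have "\<dots> \<le> c * (Y n \<omega> / m n)"
        using Yge[OF w, of n] m0[of n] by (intro mult_right_mono) (auto simp: c_def)
      finally show ?thesis .
    qed
    define G where "G n \<omega> = (min \<bar>X n \<omega> / a n - 1\<bar> (2*c))^2" for n \<omega>
    have [measurable]: "G n \<in> borel_measurable M" for n unfolding G_def by measurable
    have Gb: "0 \<le> G n \<omega> \<and> G n \<omega> \<le> (2*c)^2" if "\<omega> \<in> space M" for n \<omega>
    proof -
      have h: "0 \<le> min \<bar>X n \<omega> / a n - 1\<bar> (2*c)" "min \<bar>X n \<omega> / a n - 1\<bar> (2*c) \<le> 2*c"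
        using c1 by auto
      show ?thesis unfolding G_def using power_mono[OF h(2) h(1), of 2] h(1) by simp
    qed
    have iG: "integrable M (G n)" for n
      by (rule integrable_const_bound[where B="(2*c)^2"]) (use Gb in auto)
    have EG: "(\<lambda>n. expectation (G n)) \<longlonglongrightarrow> 0"
    proof (rule bdd_conv_exp[OF _ Gb])
      fix e :: real assume e: "e > 0"
      have se: "sqrt e > 0" using e by simp
      have cU': "(\<lambda>n. prob {\<omega>\<in>space M. \<bar>X n \<omega> / a n - 1\<bar> > sqrt e}) \<longlonglongrightarrow> 0"
        using cU se unfolding conv_in_prob_def a_def by auto
      have sub: "G n \<omega> > e \<Longrightarrow> \<bar>X n \<omega> / a n - 1\<bar> > sqrt e" for n \<omega>
      proof -
        assume "G n \<omega> > e"
        hence "e < \<bar>X n \<omega> / a n - 1\<bar>^2" unfolding G_def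
          by (smt (verit) abs_ge_zero min.cobounded1 min_def power_mono zero_le_mult_iff c1)
        hence "sqrt e < sqrt (\<bar>X n \<omega> / a n - 1\<bar>^2)" by (rule real_sqrt_less_mono)
        thus ?thesis by simp
      qed
      show "(\<lambda>n. prob {\<omega>\<in>space M. G n \<omega> > e}) \<longlonglongrightarrow> 0"
        by (rule union_conv[OF _ _ _ _ cU' cU']) (use sub in auto)
    qed auto
    have iQ: "integrable M (\<lambda>\<omega>. (Y n \<omega> / m n - 1)^2)" for n using qm unfolding conv_in_qm_def by auto
    have EQ: "(\<lambda>n. expectation (\<lambda>\<omega>. (Y n \<omega> / m n - 1)^2)) \<longlonglongrightarrow> 0" using qm unfolding conv_in_qm_def by auto
    have var: "variance (X n) / (expectation (X n))^2 = expectation (\<lambda>\<omega>. (X n \<omega> / a n - 1)^2)" for n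
    proof -
      have "variance (X n) / (expectation (X n))^2 = expectation (\<lambda>\<omega>. (X n \<omega> - a n)^2 / (a n)^2)"
        by (simp add: a_def)
      also have "\<dots> = expectation (\<lambda>\<omega>. (X n \<omega> / a n - 1)^2)"
        using a0[of n] by (intro Bochner_Integration.integral_cong) (auto simp: field_simps power2_eq_square)
      finally show ?thesis .
    qed
    show ?thesis unfolding var
    proof (rule tendsto_sandwich[where f="\<lambda>_. 0" and h="\<lambda>n. expectation (G n) + 4 * c^2 * expectation (\<lambda>\<omega>. (Y n \<omega> / m n - 1)^2)"])
      show "\<forall>\<^sub>F n in sequentially. 0 \<le> expectation (\<lambda>\<omega>. (X n \<omega> / a n - 1)^2)"
        by (auto intro!: Bochner_Integration.integral_nonneg)
      show "\<forall>\<^sub>F n in sequentially. expectation (\<lambda>\<omega>. (X n \<omega> / a n - 1)^2) \<le> expectation (G n) + 4 * c^2 * expectation (\<lambda>\<omega>. (Y n \<omega> / m n - 1)^2)"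
      proof (intro always_eventually allI)
        fix n
        have "expectation (\<lambda>\<omega>. (X n \<omega> / a n - 1)^2) \<le> expectation (\<lambda>\<omega>. G n \<omega> + 4 * c^2 * (Y n \<omega> / m n - 1)^2)"
        proof (rule integral_mono')
          show "integrable M (\<lambda>\<omega>. G n \<omega> + 4 * c^2 * (Y n \<omega> / m n - 1)^2)"
            using iG iQ by auto
          fix \<omega> assume w: "\<omega> \<in> space M"
          show "(X n \<omega> / a n - 1)^2 \<le> G n \<omega> + 4 * c^2 * (Y n \<omega> / m n - 1)^2"
            unfolding G_def using aux3[OF _ UZ[OF w] c1] XY[OF w, of n] a0[of n] Yge[OF w, of n] m0[of n]
            by auto
          show "0 \<le> G n \<omega> + 4 * c^2 * (Y n \<omega> / m n - 1)^2" using Gb[OF w, of n] by simp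
        qed
        also have "\<dots> = expectation (G n) + 4 * c^2 * expectation (\<lambda>\<omega>. (Y n \<omega> / m n - 1)^2)"
          using iG[of n] iQ[of n] by simp
        finally show "expectation (\<lambda>\<omega>. (X n \<omega> / a n - 1)^2) \<le> expectation (G n) + 4 * c^2 * expectation (\<lambda>\<omega>. (Y n \<omega> / m n - 1)^2)" .
      qed
      show "(\<lambda>n. expectation (G n) + 4 * c^2 * expectation (\<lambda>\<omega>. (Y n \<omega> / m n - 1)^2)) \<longlonglongrightarrow> 0"
        using tendsto_add[OF EG tendsto_mult_right_zero[OF EQ]] by simp
    qed simp
  qed
  show ?thesis using part1 part2 unfolding m_def by blast
qed

end
theorem lemma4p2:
  fixes M :: "'a measure" and X Y :: "nat \<Rightarrow> 'a \<Rightarrow> real" and \<kappa> :: real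
  assumes "prob_space M"
    and "\<And>n. X n \<in> borel_measurable M"
    and "\<And>n. Y n \<in> borel_measurable M"
    and "\<kappa> > 0"
    and "\<And>n \<omega>. \<omega> \<in> space M \<Longrightarrow> 0 \<le> X n \<omega> \<and> X n \<omega> \<le> \<kappa> * Y n \<omega>"
    and "\<And>n. integrable M (Y n)"
    and "\<And>n. prob_space.expectation M (Y n) > 0"
    and "conv_in_prob M (\<lambda>n \<omega>. Y n \<omega> / prob_space.expectation M (Y n)) 1"
  shows "((\<lambda>n. prob_space.expectation M (X n) / prob_space.expectation M (Y n)) \<longlonglongrightarrow> 0
            \<longleftrightarrow> conv_in_prob M (\<lambda>n \<omega>. X n \<omega> / Y n \<omega>) 0)
       \<and> (\<forall>\<tau>::real. \<tau> > 0
            \<longrightarrow> (\<forall>n. prob_space.expectation M (X n) \<ge> \<tau> * prob_space.expectation M (Y n))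
            \<longrightarrow> conv_in_qm M (\<lambda>n \<omega>. Y n \<omega> / prob_space.expectation M (Y n)) 1
            \<longrightarrow> conv_in_prob M (\<lambda>n \<omega>. X n \<omega> / prob_space.expectation M (X n)) 1
            \<longrightarrow> (\<lambda>n. prob_space.variance M (X n) / (prob_space.expectation M (X n))^2) \<longlonglongrightarrow> 0)"
proof -
  interpret prob_space M by fact
  show ?thesis using main[OF assms(2-8)] by simp
qed

end
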